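(* Let $M,N,Q$ be positive integers with $N\le M$, let $S=\{\vec b\in\mathbb{F}_2^M: H(\vec b)=N\}$, and let $\mathbf{G}\in\mathbb{F}_2^{Q\times M}$ be such that $\vec b\mapsto\mathbf{G}\vec b$ is injective on $S$. Let $\hat H=\sum_{i,j=1}^M h_{ij}\hat a_i^\dagger\hat a_j+\sum_{i,j,k,l=1}^M g_{ijkl}\hat a_i^\dagger\hat a_j^\dagger\hat a_k\hat a_l$ be a Hermitian operator with real coefficients $h_{ij},g_{ijkl}$, and let $\mathcal{E}(\hat H)=\sum_{\vec b,\vec b'\in S}\langle\vec b'|\hat H|\vec b\rangle\,|\mathbf{G}\vec b'\rangle\langle\mathbf{G}\vec b|$, an operator on $(\mathbb{C}^2)^{\otimes Q}$. Then $\mathcal{E}(\hat H)=\sum_{t=1}^{K}\hat H_t$, where each $\hat H_t$ is a linear combination of pairwise commuting Pauli strings (elements of $\{I,X,Y,Z\}^{\otimes Q}$), and the number $K$ of such groups satisfies $K=\mathcal{O}(M^4)$, i.e. $K\le cM^4$ for an absolute constant $c$ independent of $N,Q,\mathbf{G},h,g$.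
   Context: Fermionic operators are in the Jordan–Wigner representation on the Fock basis $\{|\vec b\rangle:\vec b\in\mathbb{F}_2^M\}$: $\hat a_j|\vec b\rangle=(-1)^{\sum_{m<j}\vec b[m]}|\vec b\oplus\vec e_j\rangle$ if $\vec b[j]=1$ and $\hat a_j|\vec b\rangle=0$ otherwise, and $\hat a_j^\dagger$ is its adjoint; $\vec e_j$ is the $j$-th unit vector. $H(\vec b)$ is Hamming weight. Such a Hamiltonian preserves the span of $\{|\vec b\rangle:\vec b\in S\}$. A set of pairwise commuting Pauli strings can be simultaneously diagonalised by a single Clifford unitary, so each group $\hat H_t$ corresponds to one Clifford measurement basis; the theorem bounds the number of Clifford measurement bases needed to estimate $\langle\mathcal{E}(\hat H)\rangle$. *)

theory Defs
  imports Complex_Main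
begin

text \<open>Bit vectors in F_2^n are modelled as functions nat => bool that vanish
  at indices >= n (indices 0..n-1 instead of 1..n).  Operators on the span of a
  finite set B of basis vectors are modelled by their matrix entries
  A x y = <x|A|y>.\<close>

definition bvecs :: "nat \<Rightarrow> (nat \<Rightarrow> bool) set" where
  "bvecs n = {b. \<forall>i. n \<le> i \<longrightarrow> \<not> b i}"

definition hamming :: "(nat \<Rightarrow> bool) \<Rightarrow> nat" where
  "hamming b = card {m. b m}"

definition mmul :: "'a set \<Rightarrow> ('a \<Rightarrow> 'a \<Rightarrow> complex) \<Rightarrow> ('a \<Rightarrow> 'a \<Rightarrow> complex) \<Rightarrow> ('a \<Rightarrow> 'a \<Rightarrow> complex)" where
  "mmul B A C = (\<lambda>x y. \<Sum>z\<in>B. A x z * C z y)"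

text \<open>Jordan-Wigner annihilation operator a_j:
  a_j |b> = (-1)^(sum_{m<j} b[m]) |b xor e_j> if b[j] = 1, else 0.\<close>
definition ann :: "nat \<Rightarrow> (nat \<Rightarrow> bool) \<Rightarrow> (nat \<Rightarrow> bool) \<Rightarrow> complex" where
  "ann j b' b = (if b j \<and> b' = b(j := False) then (-1) ^ card {m. m < j \<and> b m} else 0)"

definition cre :: "nat \<Rightarrow> (nat \<Rightarrow> bool) \<Rightarrow> (nat \<Rightarrow> bool) \<Rightarrow> complex" where
  "cre j b' b = cnj (ann j b b')"

definition fham :: "nat \<Rightarrow> (nat \<Rightarrow> nat \<Rightarrow> real) \<Rightarrow> (nat \<Rightarrow> nat \<Rightarrow> nat \<Rightarrow> nat \<Rightarrow> real)
    \<Rightarrow> (nat \<Rightarrow> bool) \<Rightarrow> (nat \<Rightarrow> bool) \<Rightarrow> complex" where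
  "fham M h g = (\<lambda>b' b.
     (\<Sum>i<M. \<Sum>j<M. complex_of_real (h i j) * mmul (bvecs M) (cre i) (ann j) b' b)
   + (\<Sum>i<M. \<Sum>j<M. \<Sum>k<M. \<Sum>l<M. complex_of_real (g i j k l) *
        mmul (bvecs M) (cre i) (mmul (bvecs M) (cre j) (mmul (bvecs M) (ann k) (ann l))) b' b))"

definition gmul :: "nat \<Rightarrow> nat \<Rightarrow> (nat \<Rightarrow> nat \<Rightarrow> bool) \<Rightarrow> (nat \<Rightarrow> bool) \<Rightarrow> (nat \<Rightarrow> bool)" where
  "gmul Q M G b = (\<lambda>q. q < Q \<and> odd (card {m. m < M \<and> G q m \<and> b m}))"

definition encode :: "nat \<Rightarrow> nat \<Rightarrow> (nat \<Rightarrow> nat \<Rightarrow> bool) \<Rightarrow> (nat \<Rightarrow> bool) set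
    \<Rightarrow> ((nat \<Rightarrow> bool) \<Rightarrow> (nat \<Rightarrow> bool) \<Rightarrow> complex) \<Rightarrow> (nat \<Rightarrow> bool) \<Rightarrow> (nat \<Rightarrow> bool) \<Rightarrow> complex" where
  "encode Q M G S H = (\<lambda>x y. \<Sum>b\<in>S. \<Sum>b'\<in>S.
      H b' b * (if x = gmul Q M G b' \<and> y = gmul Q M G b then 1 else 0))"

datatype pauli = PI | PX | PY | PZ

text \<open>Single-qubit Pauli matrices, basis |0> = False, |1> = True.\<close>
fun pmat :: "pauli \<Rightarrow> bool \<Rightarrow> bool \<Rightarrow> complex" where
  "pmat PI a b = (if a = b then 1 else 0)"
| "pmat PX a b = (if a \<noteq> b then 1 else 0)"
| "pmat PY a b = (if a = b then 0 else if a then \<i> else - \<i>)"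
| "pmat PZ a b = (if a = b then (if a then -1 else 1) else 0)"

definition pauli_strings :: "nat \<Rightarrow> (nat \<Rightarrow> pauli) set" where
  "pauli_strings Q = {P. \<forall>q. Q \<le> q \<longrightarrow> P q = PI}"

definition pstring_mat :: "nat \<Rightarrow> (nat \<Rightarrow> pauli) \<Rightarrow> (nat \<Rightarrow> bool) \<Rightarrow> (nat \<Rightarrow> bool) \<Rightarrow> complex" where
  "pstring_mat Q P = (\<lambda>x y. \<Prod>q<Q. pmat (P q) (x q) (y q))"

definition commuting_pauli_comb :: "nat \<Rightarrow> ((nat \<Rightarrow> bool) \<Rightarrow> (nat \<Rightarrow> bool) \<Rightarrow> complex) \<Rightarrow> bool" where
  "commuting_pauli_comb Q A \<longleftrightarrow>
     (\<exists>T c. finite T \<and> T \<subseteq> pauli_strings Q \<and>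
        (\<forall>P\<in>T. \<forall>P'\<in>T. mmul (bvecs Q) (pstring_mat Q P) (pstring_mat Q P')
                     = mmul (bvecs Q) (pstring_mat Q P') (pstring_mat Q P)) \<and>
        (\<forall>x\<in>bvecs Q. \<forall>y\<in>bvecs Q. A x y = (\<Sum>P\<in>T. c P * pstring_mat Q P x y)))"

end

theory Submission imports Defs begin

lemma UNIV_pauli: "(UNIV::pauli set) = {PI,PX,PY,PZ}"
  by (auto intro: pauli.exhaust)

instance pauli :: finite
  by standard (simp add: UNIV_pauli)

definition ext :: "nat \<Rightarrow> 'a \<Rightarrow> (nat \<Rightarrow> 'a) set" where
  "ext Q d = {z. \<forall>q. Q \<le> q \<longrightarrow> z q = d}"

lemma ext_Suc: "ext (Suc Q) d = (\<lambda>(a,z). z(Q:=a)) ` (UNIV \<times> ext Q d)"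
proof
  show "ext (Suc Q) d \<subseteq> (\<lambda>(a,z). z(Q:=a)) ` (UNIV \<times> ext Q d)"
  proof
    fix z assume z: "z \<in> ext (Suc Q) d"
    then have "z(Q:=d) \<in> ext Q d" by (auto simp: ext_def)
    moreover have "z = (z(Q:=d))(Q:= z Q)" by simp
    ultimately show "z \<in> (\<lambda>(a,z). z(Q:=a)) ` (UNIV \<times> ext Q d)"
      by (auto intro!: image_eqI[where x="(z Q, z(Q:=d))"])
  qed
  show "(\<lambda>(a,z). z(Q:=a)) ` (UNIV \<times> ext Q d) \<subseteq> ext (Suc Q) d"
    by (auto simp: ext_def)
qed

lemma inj_ext: "inj_on (\<lambda>(a,z). z(Q:=a)) (UNIV \<times> ext Q d)"
proof (rule inj_onI, clarsimp)
  fix a z a' z'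
  assume z: "z \<in> ext Q d" and z': "z' \<in> ext Q d" and e: "z(Q := a) = z'(Q := a')"
  have "a = a'" using fun_cong[OF e, of Q] by simp
  moreover have "z = z'"
  proof
    fix q show "z q = z' q"
    proof (cases "q = Q")
      case True then show ?thesis using z z' by (simp add: ext_def)
    next
      case False then show ?thesis using fun_cong[OF e, of q] by simp
    qed
  qed
  ultimately show "a = a' \<and> z = z'" by simp
qed

lemma ext_0: "ext 0 d = {\<lambda>_. d}"
  by (auto simp: ext_def)

lemma finite_ext: "finite (ext Q (d::'a::finite))"
  by (induction Q) (simp_all add: ext_0 ext_Suc)

lemma sum_prod_ext:
  fixes f :: "nat \<Rightarrow> 'a::finite \<Rightarrow> 'b::comm_semiring_1"
  shows "(\<Sum>z\<in>ext Q d. \<Prod>q<Q. f q (z q)) = (\<Prod>q<Q. \<Sum>a\<in>UNIV. f q a)"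
proof (induction Q)
  case 0
  then show ?case by (simp add: ext_0)
next
  case (Suc Q)
  have "(\<Sum>z\<in>ext (Suc Q) d. \<Prod>q<Suc Q. f q (z q))
      = (\<Sum>p\<in>UNIV \<times> ext Q d. \<Prod>q<Suc Q. f q (((\<lambda>(a,z). z(Q:=a)) p) q))"
    unfolding ext_Suc by (subst sum.reindex[OF inj_ext]) (simp add: comp_def)
  also have "\<dots> = (\<Sum>a\<in>UNIV. \<Sum>z\<in>ext Q d. f Q a * (\<Prod>q<Q. f q (z q)))"
    unfolding sum.cartesian_product
  proof (intro sum.cong refl)
    fix p assume "p \<in> (UNIV::'a set) \<times> ext Q d"
    obtain a :: 'a and z where p: "p = (a, z)" by (cases p)
    have "(\<Prod>q<Q. f q ((z(Q := a)) q)) = (\<Prod>q<Q. f q (z q))"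
      by (intro prod.cong) auto
    then show "(\<Prod>q<Suc Q. f q ((case p of (a, z) \<Rightarrow> z(Q := a)) q)) = (case p of (a, z) \<Rightarrow> f Q a * (\<Prod>q<Q. f q (z q)))"
      by (simp add: p mult.commute)
  qed
  also have "\<dots> = (\<Sum>a\<in>UNIV. f Q a) * (\<Sum>z\<in>ext Q d. (\<Prod>q<Q. f q (z q)))"
    by (simp add: sum_distrib_left sum_distrib_right sum.swap[of _ UNIV])
  also have "\<dots> = (\<Prod>q<Suc Q. \<Sum>a\<in>UNIV. f q a)"
    using Suc by (simp add: mult.commute)
  finally show ?case .
qed

lemma bvecs_ext: "bvecs Q = ext Q False"
  by (auto simp: bvecs_def ext_def)

lemma ps_ext: "pauli_strings Q = ext Q PI"
  by (auto simp: pauli_strings_def ext_def)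

lemma pauli_single:
  "(\<Sum>p\<in>UNIV. cnj (pmat p a' b') * pmat p a b) = (if a' = a \<and> b' = b then 2 else 0)"
  by (cases a; cases b; cases a'; cases b') (simp_all add: UNIV_pauli)


lemma finite_bvecs: "finite (bvecs Q)" by (simp add: bvecs_ext finite_ext)
lemma finite_ps: "finite (pauli_strings Q)" by (simp add: ps_ext finite_ext)

lemma bvecs_eq:
  assumes "x \<in> bvecs Q" "y \<in> bvecs Q" "\<forall>q<Q. x q = y q" shows "x = y"
proof
  fix q show "x q = y q" using assms unfolding bvecs_def by (cases "q < Q") auto
qed

lemma pauli_orth:
  assumes "x \<in> bvecs Q" "y \<in> bvecs Q" "x' \<in> bvecs Q" "y' \<in> bvecs Q"
  shows "(\<Sum>P\<in>pauli_strings Q. cnj (pstring_mat Q P x' y') * pstring_mat Q P x y)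
        = (if x' = x \<and> y' = y then 2 ^ Q else 0)"
proof -
  have "(\<Sum>P\<in>pauli_strings Q. cnj (pstring_mat Q P x' y') * pstring_mat Q P x y)
     = (\<Sum>P\<in>ext Q PI. \<Prod>q<Q. cnj (pmat (P q) (x' q) (y' q)) * pmat (P q) (x q) (y q))"
    by (simp add: ps_ext pstring_mat_def cnj_prod prod.distrib)
  also have "\<dots> = (\<Prod>q<Q. if x' q = x q \<and> y' q = y q then 2 else 0)"
    by (subst sum_prod_ext[where f="\<lambda>q p. cnj (pmat p (x' q) (y' q)) * pmat p (x q) (y q)"])
       (simp add: pauli_single)
  also have "\<dots> = (if x' = x \<and> y' = y then 2 ^ Q else 0)"
  proof (cases "x' = x \<and> y' = y")
    case True then show ?thesis by simp
  next
    case False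
    then have "\<exists>q<Q. \<not> (x' q = x q \<and> y' q = y q)"
      using bvecs_eq assms by metis
    then show ?thesis using False by (auto intro: prod_zero)
  qed
  finally show ?thesis .
qed

definition pc :: "nat \<Rightarrow> ((nat \<Rightarrow> bool) \<Rightarrow> (nat \<Rightarrow> bool) \<Rightarrow> complex) \<Rightarrow> (nat \<Rightarrow> pauli) \<Rightarrow> complex" where
  "pc Q A P = (\<Sum>x'\<in>bvecs Q. \<Sum>y'\<in>bvecs Q. cnj (pstring_mat Q P x' y') * A x' y') / 2 ^ Q"

lemma pauli_complete:
  assumes "x \<in> bvecs Q" "y \<in> bvecs Q"
  shows "A x y = (\<Sum>P\<in>pauli_strings Q. pc Q A P * pstring_mat Q P x y)"
proof -
  define F where "F = (\<lambda>P x' y'. cnj (pstring_mat Q P x' y') * A x' y' / 2 ^ Q * pstring_mat Q P x y)"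
  have "(\<Sum>P\<in>pauli_strings Q. pc Q A P * pstring_mat Q P x y)
     = (\<Sum>P\<in>pauli_strings Q. \<Sum>x'\<in>bvecs Q. \<Sum>y'\<in>bvecs Q. F P x' y')"
    unfolding pc_def F_def by (simp add: sum_divide_distrib sum_distrib_right)
  also have "\<dots> = (\<Sum>x'\<in>bvecs Q. \<Sum>P\<in>pauli_strings Q. \<Sum>y'\<in>bvecs Q. F P x' y')"
    by (rule sum.swap)
  also have "\<dots> = (\<Sum>x'\<in>bvecs Q. \<Sum>y'\<in>bvecs Q. \<Sum>P\<in>pauli_strings Q. F P x' y')"
    by (intro sum.cong refl sum.swap)
  also have "\<dots> = (\<Sum>x'\<in>bvecs Q. \<Sum>y'\<in>bvecs Q. A x' y' *
          (\<Sum>P\<in>pauli_strings Q. cnj (pstring_mat Q P x' y') * pstring_mat Q P x y)) / 2 ^ Q"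
    unfolding F_def by (simp add: sum_divide_distrib sum_distrib_left mult_ac)
  also have "\<dots> = (\<Sum>x'\<in>bvecs Q. \<Sum>y'\<in>bvecs Q. if x' = x then (if y' = y then A x y * 2 ^ Q else 0) else 0) / 2 ^ Q"
    by (intro arg_cong[where f="\<lambda>t. t / 2 ^ Q"] sum.cong refl) (simp add: pauli_orth assms)
  also have "\<dots> = (\<Sum>x'\<in>bvecs Q. if x' = x then (\<Sum>y'\<in>bvecs Q. if y' = y then A x y * 2 ^ Q else 0) else 0) / 2 ^ Q"
    by (intro arg_cong[where f="\<lambda>t. t / 2 ^ Q"] sum.cong refl) auto
  also have "\<dots> = A x y"
    using assms by (simp add: finite_bvecs)
  finally show ?thesis by simp
qed


lemma mm_pstring:
  "mmul (bvecs Q) (pstring_mat Q P) (pstring_mat Q P') x y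
     = (\<Prod>q<Q. \<Sum>a\<in>UNIV. pmat (P q) (x q) a * pmat (P' q) a (y q))"
  unfolding mmul_def pstring_mat_def bvecs_ext
  by (simp add: prod.distrib[symmetric]
       sum_prod_ext[where f="\<lambda>q a. pmat (P q) (x q) a * pmat (P' q) a (y q)"])

definition sg :: "pauli \<Rightarrow> pauli \<Rightarrow> complex" where
  "sg p p' = (if p \<noteq> PI \<and> p' \<noteq> PI \<and> p \<noteq> p' then -1 else 1)"

lemma single_comm:
  "(\<Sum>a\<in>UNIV. pmat p x a * pmat p' a y) = sg p p' * (\<Sum>a\<in>UNIV. pmat p' x a * pmat p a y)"
  by (cases p; cases p'; cases x; cases y) (simp_all add: sg_def UNIV_bool)

definition ys :: "pauli \<Rightarrow> complex" where
  "ys p = (if p = PY then -1 else 1)"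

definition sigma :: "nat \<Rightarrow> (nat \<Rightarrow> pauli) \<Rightarrow> complex" where
  "sigma Q P = (\<Prod>q<Q. ys (P q))"

lemma sigma_pm: "sigma Q P = 1 \<or> sigma Q P = -1"
  unfolding sigma_def by (induction Q) (auto simp: ys_def)

definition Tv :: "nat \<Rightarrow> (nat \<Rightarrow> bool) \<Rightarrow> (nat \<Rightarrow> pauli) set" where
  "Tv Q v = {P \<in> pauli_strings Q. \<forall>q<Q. (P q = PX \<or> P q = PY) = v q}"

lemma sg_ys: "(p = PX \<or> p = PY) = (p' = PX \<or> p' = PY) \<Longrightarrow> sg p p' = ys p * ys p'"
  by (cases p; cases p') (simp_all add: sg_def ys_def)

lemma comm_T:
  assumes "P \<in> Tv Q v" "P' \<in> Tv Q v" "sigma Q P = sigma Q P'"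
  shows "mmul (bvecs Q) (pstring_mat Q P) (pstring_mat Q P')
       = mmul (bvecs Q) (pstring_mat Q P') (pstring_mat Q P)"
proof (intro ext)
  fix x y
  have ss: "sigma Q P * sigma Q P' = 1" using assms(3) sigma_pm[of Q P] by auto
  have "(\<Prod>q<Q. \<Sum>a\<in>UNIV. pmat (P q) (x q) a * pmat (P' q) a (y q))
      = (\<Prod>q<Q. (ys (P q) * ys (P' q)) * (\<Sum>a\<in>UNIV. pmat (P' q) (x q) a * pmat (P q) a (y q)))"
  proof (intro prod.cong refl)
    fix q assume "q \<in> {..<Q}"
    then have "(P q = PX \<or> P q = PY) = (P' q = PX \<or> P' q = PY)"
      using assms(1,2) by (auto simp: Tv_def)
    then show "(\<Sum>a\<in>UNIV. pmat (P q) (x q) a * pmat (P' q) a (y q))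
      = (ys (P q) * ys (P' q)) * (\<Sum>a\<in>UNIV. pmat (P' q) (x q) a * pmat (P q) a (y q))"
      by (simp add: single_comm[of "P q"] sg_ys)
  qed
  also have "\<dots> = (sigma Q P * sigma Q P') * (\<Prod>q<Q. \<Sum>a\<in>UNIV. pmat (P' q) (x q) a * pmat (P q) a (y q))"
    by (simp add: sigma_def prod.distrib)
  finally show "mmul (bvecs Q) (pstring_mat Q P) (pstring_mat Q P') x y
       = mmul (bvecs Q) (pstring_mat Q P') (pstring_mat Q P) x y"
    by (simp add: mm_pstring ss)
qed

lemma pmat_zero: "(p = PX \<or> p = PY) \<noteq> (a \<noteq> b) \<Longrightarrow> pmat p a b = 0"
  by (cases p) auto

definition dec :: "nat \<Rightarrow> nat \<Rightarrow> ((nat \<Rightarrow> bool) \<Rightarrow> (nat \<Rightarrow> bool) \<Rightarrow> complex) \<Rightarrow> bool" where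
  "dec Q K A \<longleftrightarrow> (\<exists>Ht. (\<forall>t<K. commuting_pauli_comb Q (Ht t)) \<and>
      (\<forall>x\<in>bvecs Q. \<forall>y\<in>bvecs Q. A x y = (\<Sum>t<K. Ht t x y)))"

definition xv :: "(nat \<Rightarrow> bool) \<Rightarrow> (nat \<Rightarrow> bool) \<Rightarrow> (nat \<Rightarrow> bool)" where
  "xv y v = (\<lambda>q. y q \<noteq> v q)"

lemma comb_T:
  assumes "T \<subseteq> Tv Q v" "\<forall>P\<in>T. sigma Q P = s"
  shows "commuting_pauli_comb Q (\<lambda>x y. \<Sum>P\<in>T. c P * pstring_mat Q P x y)"
  unfolding commuting_pauli_comb_def
proof (intro exI[of _ T] exI[of _ c] conjI ballI)
  have "T \<subseteq> pauli_strings Q" using assms(1) by (auto simp: Tv_def)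
  then show "finite T" "T \<subseteq> pauli_strings Q" using finite_ps finite_subset by auto
  fix P P' assume "P \<in> T" "P' \<in> T"
  then show "mmul (bvecs Q) (pstring_mat Q P) (pstring_mat Q P') =
           mmul (bvecs Q) (pstring_mat Q P') (pstring_mat Q P)"
    using assms by (intro comm_T[of _ Q v]) auto
qed simp

lemma core:
  assumes supp: "\<forall>x\<in>bvecs Q. \<forall>y\<in>bvecs Q. A x y \<noteq> 0 \<longrightarrow> x = xv y v"
  shows "dec Q 2 A"
proof -
  define T0 where "T0 = {P \<in> Tv Q v. sigma Q P = 1}"
  define T1 where "T1 = {P \<in> Tv Q v. sigma Q P = -1}"
  define Ht where "Ht = (\<lambda>t x y. \<Sum>P\<in>(if t = (0::nat) then T0 else T1). pc Q A P * pstring_mat Q P x y)"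
  have fin: "finite (Tv Q v)" using finite_ps finite_subset[of "Tv Q v"] by (auto simp: Tv_def)
  have cz: "pc Q A P = 0" if "P \<in> pauli_strings Q" "P \<notin> Tv Q v" for P
  proof -
    have "\<not> (\<forall>q<Q. (P q = PX \<or> P q = PY) = v q)" using that by (simp add: Tv_def)
    then obtain q where q: "q < Q" "(P q = PX \<or> P q = PY) \<noteq> v q" by blast
    have "cnj (pstring_mat Q P x' y') * A x' y' = 0" if "x' \<in> bvecs Q" "y' \<in> bvecs Q" for x' y'
    proof (cases "A x' y' = 0")
      case False
      then have "x' = xv y' v" using supp that by auto
      then have "pmat (P q) (x' q) (y' q) = 0" using q by (intro pmat_zero) (auto simp: xv_def)
      then have "pstring_mat Q P x' y' = 0" unfolding pstring_mat_def using q
        by (intro prod_zero) auto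
      then show ?thesis by simp
    qed simp
    then show ?thesis unfolding pc_def by (simp add: sum.neutral)
  qed
  show ?thesis unfolding dec_def
  proof (intro exI[of _ Ht] conjI allI impI ballI)
    fix t :: nat assume "t < 2"
    show "commuting_pauli_comb Q (Ht t)"
      unfolding Ht_def
      by (cases "t = 0") (rule comb_T; auto simp: T0_def T1_def)+
  next
    fix x y assume xy: "x \<in> bvecs Q" "y \<in> bvecs Q"
    have "A x y = (\<Sum>P\<in>pauli_strings Q. pc Q A P * pstring_mat Q P x y)"
      using pauli_complete xy by blast
    also have "\<dots> = (\<Sum>P\<in>Tv Q v. pc Q A P * pstring_mat Q P x y)"
      by (rule sum.mono_neutral_right) (auto simp: finite_ps cz Tv_def)
    also have "Tv Q v = T0 \<union> T1" using sigma_pm by (auto simp: T0_def T1_def)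
    also have "(\<Sum>P\<in>T0 \<union> T1. pc Q A P * pstring_mat Q P x y)
        = (\<Sum>P\<in>T0. pc Q A P * pstring_mat Q P x y) + (\<Sum>P\<in>T1. pc Q A P * pstring_mat Q P x y)"
      by (rule sum.union_disjoint) (use fin in \<open>auto simp: T0_def T1_def intro: finite_subset\<close>)
    also have "\<dots> = (\<Sum>t<2. Ht t x y)"
      by (simp add: Ht_def numeral_2_eq_2)
    finally show "A x y = (\<Sum>t<2. Ht t x y)" .
  qed
qed


lemma dec_add:
  assumes "dec Q K1 A" "dec Q K2 B"
  shows "dec Q (K1 + K2) (\<lambda>x y. A x y + B x y)"
proof -
  obtain H1 where H1: "\<forall>t<K1. commuting_pauli_comb Q (H1 t)"
      "\<forall>x\<in>bvecs Q. \<forall>y\<in>bvecs Q. A x y = (\<Sum>t<K1. H1 t x y)"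
    using assms(1) unfolding dec_def by blast
  obtain H2 where H2: "\<forall>t<K2. commuting_pauli_comb Q (H2 t)"
      "\<forall>x\<in>bvecs Q. \<forall>y\<in>bvecs Q. B x y = (\<Sum>t<K2. H2 t x y)"
    using assms(2) unfolding dec_def by blast
  define H where "H = (\<lambda>t. if t < K1 then H1 t else H2 (t - K1))"
  have split: "(\<Sum>t<a + b. f t) = (\<Sum>t<a. f t) + (\<Sum>t<b. f (a + t))" for a b and f :: "nat \<Rightarrow> complex"
    by (induction b) (simp_all add: add_ac)
  show ?thesis unfolding dec_def
  proof (intro exI[of _ H] conjI allI impI ballI)
    fix t assume "t < K1 + K2"
    then show "commuting_pauli_comb Q (H t)" using H1 H2 by (auto simp: H_def)
  next
    fix x y assume "x \<in> bvecs Q" "y \<in> bvecs Q"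
    then show "A x y + B x y = (\<Sum>t<K1 + K2. H t x y)"
      using H1 H2 by (simp add: split H_def)
  qed
qed

lemma dec_sum:
  assumes "finite I" "\<forall>i\<in>I. dec Q k (A i)"
  shows "dec Q (k * card I) (\<lambda>x y. \<Sum>i\<in>I. A i x y)"
  using assms
proof (induction I rule: finite_induct)
  case empty
  then show ?case by (simp add: dec_def)
next
  case (insert i I)
  have "dec Q (k + k * card I) (\<lambda>x y. A i x y + (\<Sum>i\<in>I. A i x y))"
    using insert by (intro dec_add) auto
  then show ?case using insert by simp
qed

definition flip :: "nat \<Rightarrow> (nat \<Rightarrow> bool) \<Rightarrow> (nat \<Rightarrow> bool)" where
  "flip j b = b(j := \<not> b j)"

lemma ann_supp: "ann j b' b \<noteq> 0 \<Longrightarrow> b' = flip j b"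
  unfolding ann_def flip_def by (auto split: if_splits)

lemma cre_supp: "cre j b' b \<noteq> 0 \<Longrightarrow> b' = flip j b"
  unfolding cre_def ann_def flip_def by (auto split: if_splits simp: fun_eq_iff)

lemma mmul_supp: "mmul B A C x y \<noteq> 0 \<Longrightarrow> \<exists>z. A x z \<noteq> 0 \<and> C z y \<noteq> 0"
  unfolding mmul_def by (metis (mono_tags, lifting) mult_eq_0_iff sum.neutral)

definition col :: "nat \<Rightarrow> (nat \<Rightarrow> nat \<Rightarrow> bool) \<Rightarrow> nat \<Rightarrow> (nat \<Rightarrow> bool)" where
  "col Q G j = (\<lambda>q. q < Q \<and> G q j)"

lemma gmul_flip:
  assumes "j < M"
  shows "gmul Q M G (flip j b) = xv (gmul Q M G b) (col Q G j)"
proof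
  fix q
  define S where "S = {m. m < M \<and> G q m \<and> b m}"
  have fS: "finite S" unfolding S_def by simp
  show "gmul Q M G (flip j b) q = xv (gmul Q M G b) (col Q G j) q"
  proof (cases "G q j")
    case False
    then have "{m. m < M \<and> G q m \<and> flip j b m} = S" by (auto simp: S_def flip_def)
    then show ?thesis using False by (simp add: gmul_def xv_def col_def S_def)
  next
    case True
    show ?thesis
    proof (cases "b j")
      case bj: True
      then have e: "{m. m < M \<and> G q m \<and> flip j b m} = S - {j}" by (auto simp: S_def flip_def)
      have "j \<in> S" using bj True assms by (simp add: S_def)
      then have "card (S - {j}) = card S - 1" "card S > 0" using fS by (auto simp: card_gt_0_iff)
      then have "odd (card (S - {j})) = (\<not> odd (card S))" by auto
      then show ?thesis using True unfolding gmul_def xv_def col_def e S_def[symmetric] by auto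
    next
      case bj: False
      then have e: "{m. m < M \<and> G q m \<and> flip j b m} = insert j S" using True assms by (auto simp: S_def flip_def)
      have "j \<notin> S" using bj by (simp add: S_def)
      then have "card (insert j S) = Suc (card S)" using fS by simp
      then show ?thesis using True unfolding gmul_def xv_def col_def e S_def[symmetric] by auto
    qed
  qed
qed

lemma xv_assoc: "xv (xv y a) c = xv y (xv a c)"
  by (auto simp: xv_def fun_eq_iff)

lemma encode_supp:
  assumes "\<forall>b b'. F b' b \<noteq> 0 \<longrightarrow> gmul Q M G b' = xv (gmul Q M G b) v"
    and "encode Q M G S F x y \<noteq> 0"
  shows "x = xv y v"
proof -
  obtain b where "b \<in> S" and "(\<Sum>b'\<in>S. F b' b * (if x = gmul Q M G b' \<and> y = gmul Q M G b then 1 else 0)) \<noteq> 0"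
    using assms(2) unfolding encode_def by (meson sum.neutral)
  then obtain b' where "F b' b * (if x = gmul Q M G b' \<and> y = gmul Q M G b then 1 else 0) \<noteq> 0"
    by (meson sum.neutral)
  then have "F b' b \<noteq> 0" "x = gmul Q M G b'" "y = gmul Q M G b" by (auto split: if_splits)
  then show ?thesis using assms(1) by auto
qed

lemma encode_sum:
  "encode Q M G S (\<lambda>b' b. \<Sum>i\<in>I. F i b' b) = (\<lambda>x y. \<Sum>i\<in>I. encode Q M G S (F i) x y)"
proof (intro ext)
  fix x y
  define W where "W = (\<lambda>b' b. (if x = gmul Q M G b' \<and> y = gmul Q M G b then 1 else (0::complex)))"
  have "(\<Sum>i\<in>I. encode Q M G S (F i) x y) = (\<Sum>i\<in>I. \<Sum>b\<in>S. \<Sum>b'\<in>S. F i b' b * W b' b)"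
    unfolding encode_def W_def ..
  also have "\<dots> = (\<Sum>b\<in>S. \<Sum>i\<in>I. \<Sum>b'\<in>S. F i b' b * W b' b)" by (rule sum.swap)
  also have "\<dots> = (\<Sum>b\<in>S. \<Sum>b'\<in>S. \<Sum>i\<in>I. F i b' b * W b' b)" by (intro sum.cong refl sum.swap)
  also have "\<dots> = encode Q M G S (\<lambda>b' b. \<Sum>i\<in>I. F i b' b) x y"
    unfolding encode_def W_def by (simp add: sum_distrib_right)
  finally show "encode Q M G S (\<lambda>b' b. \<Sum>i\<in>I. F i b' b) x y = (\<Sum>i\<in>I. encode Q M G S (F i) x y)" ..
qed

lemma encode_add:
  "encode Q M G S (\<lambda>b' b. F b' b + F' b' b) = (\<lambda>x y. encode Q M G S F x y + encode Q M G S F' x y)"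
  unfolding encode_def by (intro ext) (simp add: distrib_right sum.distrib)


lemma term2:
  assumes "i < M" "j < M"
  shows "dec Q 2 (encode Q M G S (\<lambda>b' b. c * mmul (bvecs M) (cre i) (ann j) b' b))"
proof (rule core[where v="xv (col Q G j) (col Q G i)"], intro ballI impI)
  fix x y assume "encode Q M G S (\<lambda>b' b. c * mmul (bvecs M) (cre i) (ann j) b' b) x y \<noteq> 0"
  then show "x = xv y (xv (col Q G j) (col Q G i))"
  proof (rule encode_supp[rotated], intro allI impI)
    fix b b' assume "c * mmul (bvecs M) (cre i) (ann j) b' b \<noteq> 0"
    then obtain z where "cre i b' z \<noteq> 0" "ann j z b \<noteq> 0" using mmul_supp by fastforce
    then have "b' = flip i (flip j b)" using cre_supp ann_supp by blast
    then show "gmul Q M G b' = xv (gmul Q M G b) (xv (col Q G j) (col Q G i))"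
      using assms by (simp add: gmul_flip xv_assoc)
  qed
qed

lemma term4:
  assumes "i < M" "j < M" "k < M" "l < M"
  shows "dec Q 2 (encode Q M G S (\<lambda>b' b. c *
        mmul (bvecs M) (cre i) (mmul (bvecs M) (cre j) (mmul (bvecs M) (ann k) (ann l))) b' b))"
proof (rule core[where v="xv (xv (xv (col Q G l) (col Q G k)) (col Q G j)) (col Q G i)"], intro ballI impI)
  fix x y assume "encode Q M G S (\<lambda>b' b. c *
        mmul (bvecs M) (cre i) (mmul (bvecs M) (cre j) (mmul (bvecs M) (ann k) (ann l))) b' b) x y \<noteq> 0"
  then show "x = xv y (xv (xv (xv (col Q G l) (col Q G k)) (col Q G j)) (col Q G i))"
  proof (rule encode_supp[rotated], intro allI impI)
    fix b b' assume "c * mmul (bvecs M) (cre i) (mmul (bvecs M) (cre j) (mmul (bvecs M) (ann k) (ann l))) b' b \<noteq> 0"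
    then obtain z1 where z1: "cre i b' z1 \<noteq> 0" "mmul (bvecs M) (cre j) (mmul (bvecs M) (ann k) (ann l)) z1 b \<noteq> 0"
      using mmul_supp by fastforce
    then obtain z2 where z2: "cre j z1 z2 \<noteq> 0" "mmul (bvecs M) (ann k) (ann l) z2 b \<noteq> 0"
      using mmul_supp by fastforce
    then obtain z3 where z3: "ann k z2 z3 \<noteq> 0" "ann l z3 b \<noteq> 0"
      using mmul_supp by fastforce
    have "b' = flip i (flip j (flip k (flip l b)))"
      using cre_supp[OF z1(1)] cre_supp[OF z2(1)] ann_supp[OF z3(1)] ann_supp[OF z3(2)] by simp
    then show "gmul Q M G b' = xv (gmul Q M G b) (xv (xv (xv (col Q G l) (col Q G k)) (col Q G j)) (col Q G i))"
      using assms by (simp add: gmul_flip xv_assoc)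
  qed
qed

theorem theorem2:
  shows "\<exists>c::real. \<forall>(M::nat) (N::nat) (Q::nat) (G::nat \<Rightarrow> nat \<Rightarrow> bool)
            (h::nat \<Rightarrow> nat \<Rightarrow> real) (g::nat \<Rightarrow> nat \<Rightarrow> nat \<Rightarrow> nat \<Rightarrow> real).
     0 < M \<and> 0 < N \<and> 0 < Q \<and> N \<le> M \<and>
     inj_on (gmul Q M G) {b \<in> bvecs M. hamming b = N} \<and>
     (\<forall>b\<in>bvecs M. \<forall>b'\<in>bvecs M. fham M h g b' b = cnj (fham M h g b b'))
     \<longrightarrow>
     (\<exists>(K::nat) (Ht::nat \<Rightarrow> (nat \<Rightarrow> bool) \<Rightarrow> (nat \<Rightarrow> bool) \<Rightarrow> complex).
        real K \<le> c * real M ^ 4 \<and>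
        (\<forall>t<K. commuting_pauli_comb Q (Ht t)) \<and>
        (\<forall>x\<in>bvecs Q. \<forall>y\<in>bvecs Q.
           encode Q M G {b \<in> bvecs M. hamming b = N} (fham M h g) x y = (\<Sum>t<K. Ht t x y)))"
proof (rule exI[of _ "4::real"], intro allI impI)
  fix M N Q :: nat and G :: "nat \<Rightarrow> nat \<Rightarrow> bool" and h :: "nat \<Rightarrow> nat \<Rightarrow> real" and g :: "nat \<Rightarrow> nat \<Rightarrow> nat \<Rightarrow> nat \<Rightarrow> real"
  assume "0 < M \<and> 0 < N \<and> 0 < Q \<and> N \<le> M \<and>
     inj_on (gmul Q M G) {b \<in> bvecs M. hamming b = N} \<and>
     (\<forall>b\<in>bvecs M. \<forall>b'\<in>bvecs M. fham M h g b' b = cnj (fham M h g b b'))"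
  then have M: "0 < M" by simp
  define S where "S = {b \<in> bvecs M. hamming b = N}"
  let ?T2 = "\<lambda>i j. encode Q M G S (\<lambda>b' b. complex_of_real (h i j) * mmul (bvecs M) (cre i) (ann j) b' b)"
  let ?T4 = "\<lambda>i j k l. encode Q M G S (\<lambda>b' b. complex_of_real (g i j k l) *
        mmul (bvecs M) (cre i) (mmul (bvecs M) (cre j) (mmul (bvecs M) (ann k) (ann l))) b' b)"
  have d2: "dec Q (2 * M * M) (\<lambda>x y. \<Sum>i<M. \<Sum>j<M. ?T2 i j x y)"
  proof -
    have "\<forall>i\<in>{..<M}. dec Q (2 * M) (\<lambda>x y. \<Sum>j<M. ?T2 i j x y)"
      using dec_sum[of "{..<M}" Q 2] term2 by simp
    then show ?thesis using dec_sum[of "{..<M}" Q "2 * M"] by simp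
  qed
  have d4: "dec Q (2 * M * M * M * M) (\<lambda>x y. \<Sum>i<M. \<Sum>j<M. \<Sum>k<M. \<Sum>l<M. ?T4 i j k l x y)"
  proof -
    have "\<forall>i\<in>{..<M}. \<forall>j\<in>{..<M}. \<forall>k\<in>{..<M}. dec Q (2 * M) (\<lambda>x y. \<Sum>l<M. ?T4 i j k l x y)"
      using dec_sum[of "{..<M}" Q 2] term4 by simp
    then have "\<forall>i\<in>{..<M}. \<forall>j\<in>{..<M}. dec Q (2 * M * M) (\<lambda>x y. \<Sum>k<M. \<Sum>l<M. ?T4 i j k l x y)"
      using dec_sum[of "{..<M}" Q "2 * M"] by simp
    then have "\<forall>i\<in>{..<M}. dec Q (2 * M * M * M) (\<lambda>x y. \<Sum>j<M. \<Sum>k<M. \<Sum>l<M. ?T4 i j k l x y)"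
      using dec_sum[of "{..<M}" Q "2 * M * M"] by simp
    then show ?thesis using dec_sum[of "{..<M}" Q "2 * M * M * M"] by simp
  qed
  have eq: "encode Q M G S (fham M h g) = (\<lambda>x y. (\<Sum>i<M. \<Sum>j<M. ?T2 i j x y) +
      (\<Sum>i<M. \<Sum>j<M. \<Sum>k<M. \<Sum>l<M. ?T4 i j k l x y))"
    unfolding fham_def by (simp only: encode_add encode_sum)
  from dec_add[OF d2 d4] obtain Ht where Ht:
    "\<forall>t<2 * M * M + 2 * M * M * M * M. commuting_pauli_comb Q (Ht t)"
    "\<forall>x\<in>bvecs Q. \<forall>y\<in>bvecs Q. encode Q M G S (fham M h g) x y = (\<Sum>t<2 * M * M + 2 * M * M * M * M. Ht t x y)"
    unfolding dec_def eq by blast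
  have "M * M \<le> M * M * (M * M)" using M by simp
  then have "2 * M * M + 2 * M * M * M * M \<le> 4 * M ^ 4" by (simp add: power4_eq_xxxx)
  then have "real (2 * M * M + 2 * M * M * M * M) \<le> 4 * real M ^ 4"
    by (metis of_nat_le_iff of_nat_mult of_nat_numeral of_nat_power)
  then show "\<exists>(K::nat) (Ht::nat \<Rightarrow> (nat \<Rightarrow> bool) \<Rightarrow> (nat \<Rightarrow> bool) \<Rightarrow> complex). real K \<le> 4 * real M ^ 4 \<and> (\<forall>t<K. commuting_pauli_comb Q (Ht t)) \<and>
        (\<forall>x\<in>bvecs Q. \<forall>y\<in>bvecs Q.
           encode Q M G {b \<in> bvecs M. hamming b = N} (fham M h g) x y = (\<Sum>t<K. Ht t x y))"
    using Ht unfolding S_def by blast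
qed

end
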